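(* For every $x\in\mathbb{C}^n$, the element $(\mathrm{J}(0,n),x)\in\mathfrak{aff}(n,\mathbb{C})$ is strongly adjoint $c$-real.
   Context: $\mathrm{J}(\lambda,m)$ denotes the $m\times m$ Jordan block with $\lambda$ on the diagonal, $1$ on the superdiagonal and $0$ elsewhere. $\mathrm{Aff}(n,\mathbb{C})$ is the group of pairs $(A,v)$, $A\in\mathrm{GL}(n,\mathbb{C})$, $v\in\mathbb{C}^n$, identified with the matrices $\begin{pmatrix}A&v\\0&1\end{pmatrix}\in\mathrm{GL}(n+1,\mathbb{C})$ (so $(A,v)(B,w)=(AB,Aw+v)$, identity $(I_n,0)$). Its Lie algebra $\mathfrak{aff}(n,\mathbb{C})$ consists of pairs $(X,u)$, $X\in M_n(\mathbb{C})$, $u\in\mathbb{C}^n$, identified with $\begin{pmatrix}X&u\\0&0\end{pmatrix}$. The adjoint action is matrix conjugation: $\mathrm{Ad}_{(A,v)}(X,u)=(AXA^{-1},\,Au-AXA^{-1}v)$. Complex conjugation acts entrywise. An element $Y\in\mathfrak{aff}(n,\mathbb{C})$ is strongly adjoint $c$-real if there exists $h\in\mathrm{Aff}(n,\mathbb{C})$ with $h\overline{h}=(I_n,0)$ and $\mathrm{Ad}_h(Y)=-\overline{Y}$. *)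

theory Defs
  imports "Jordan_Normal_Form.Jordan_Normal_Form" "Jordan_Normal_Form.Gauss_Jordan_Elimination"
begin

type_synonym aff_pair = "complex mat \<times> complex vec"

definition Aff :: "nat \<Rightarrow> aff_pair set" where
  "Aff n = {(A, v). A \<in> carrier_mat n n \<and> invertible_mat A \<and> v \<in> carrier_vec n}"

definition aff_lie :: "nat \<Rightarrow> aff_pair set" where
  "aff_lie n = {(X, u). X \<in> carrier_mat n n \<and> u \<in> carrier_vec n}"

definition aff_mult :: "aff_pair \<Rightarrow> aff_pair \<Rightarrow> aff_pair" where
  "aff_mult h g = (case h of (A, v) \<Rightarrow> case g of (B, w) \<Rightarrow> (A * B, A *\<^sub>v w + v))"

definition aff_one :: "nat \<Rightarrow> aff_pair" where
  "aff_one n = (1\<^sub>m n, 0\<^sub>v n)"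

definition mat_inv :: "complex mat \<Rightarrow> complex mat" where
  "mat_inv A = the (mat_inverse A)"

definition Ad :: "aff_pair \<Rightarrow> aff_pair \<Rightarrow> aff_pair" where
  "Ad h Y = (case h of (A, v) \<Rightarrow> case Y of (X, u) \<Rightarrow>
      (A * X * mat_inv A, A *\<^sub>v u - (A * X * mat_inv A) *\<^sub>v v))"

definition aff_cnj :: "aff_pair \<Rightarrow> aff_pair" where
  "aff_cnj h = (case h of (A, v) \<Rightarrow> (map_mat cnj A, map_vec cnj v))"

definition aff_neg :: "aff_pair \<Rightarrow> aff_pair" where
  "aff_neg Y = (case Y of (X, u) \<Rightarrow> (- X, - u))"

definition strongly_adjoint_c_real :: "nat \<Rightarrow> aff_pair \<Rightarrow> bool" where
  "strongly_adjoint_c_real n Y \<longleftrightarrow>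
     (\<exists>h \<in> Aff n. aff_mult h (aff_cnj h) = aff_one n \<and> Ad h Y = aff_neg (aff_cnj Y))"

end

theory Submission
  imports Defs
begin

definition dg :: "nat \<Rightarrow> (nat \<Rightarrow> complex) \<Rightarrow> complex mat" where
  "dg n f = mat n n (\<lambda>(i,j). if i = j then f i else 0)"

lemma dg_carrier[simp]: "dg n f \<in> carrier_mat n n" by (simp add: dg_def)

lemma sum_delta_gen: "i < (n::nat) \<Longrightarrow> (\<Sum>k = 0..<n. if i = k then h k else 0) = (h i :: complex)"
proof -
  assume "i < n"
  have "(\<Sum>k \<in> {0..<n}. if k = i then h k else 0) = (if i \<in> {0..<n} then h i else 0)"
    by (rule sum.delta) simp
  then show ?thesis using \<open>i < n\<close> by (simp add: eq_commute[of i])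
qed

lemma sum_delta_l: "i < (n::nat) \<Longrightarrow> (\<Sum>k = 0..<n. (if i = k then f k else 0) * g k) = f i * (g i :: complex)"
proof -
  assume "i < n"
  have "(\<Sum>k = 0..<n. (if i = k then f k else 0) * g k) = (\<Sum>k = 0..<n. if i = k then f k * g k else 0)"
    by (rule sum.cong) auto
  also have "\<dots> = f i * g i" using \<open>i < n\<close> by (rule sum_delta_gen)
  finally show ?thesis .
qed

lemma sum_delta_r: "j < (n::nat) \<Longrightarrow> (\<Sum>k = 0..<n. g k * (if k = j then f k else 0)) = g j * (f j :: complex)"
proof -
  assume "j < n"
  have "(\<Sum>k = 0..<n. g k * (if k = j then f k else 0)) = (\<Sum>k = 0..<n. if j = k then g k * f k else 0)"
    by (rule sum.cong) auto
  also have "\<dots> = g j * f j" using \<open>j < n\<close> by (rule sum_delta_gen)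
  finally show ?thesis .
qed

lemma dg_mult_l: "M \<in> carrier_mat n m \<Longrightarrow> i < n \<Longrightarrow> j < m \<Longrightarrow> (dg n f * M) $$ (i,j) = f i * M $$ (i,j)"
  by (simp add: dg_def scalar_prod_def sum_delta_l)

lemma dg_mult_r: "M \<in> carrier_mat m n \<Longrightarrow> i < m \<Longrightarrow> j < n \<Longrightarrow> (M * dg n f) $$ (i,j) = M $$ (i,j) * f j"
  by (simp add: dg_def scalar_prod_def sum_delta_r)

lemma dg_mult_vec: "w \<in> carrier_vec n \<Longrightarrow> dg n f *\<^sub>v w = vec n (\<lambda>i. f i * w $ i)"
  by (rule eq_vecI) (auto simp add: dg_def scalar_prod_def sum_delta_l)

lemma dg_dg: "dg n f * dg n g = dg n (\<lambda>i. f i * g i)"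
proof (rule eq_matI)
  fix i j assume "i < dim_row (dg n (\<lambda>i. f i * g i))" "j < dim_col (dg n (\<lambda>i. f i * g i))"
  then have ij: "i < n" "j < n" by (auto simp: dg_def)
  show "(dg n f * dg n g) $$ (i, j) = dg n (\<lambda>i. f i * g i) $$ (i, j)"
    using ij by (simp add: dg_mult_l[OF dg_carrier]) (simp add: dg_def)
qed (auto simp: dg_def)

lemma jb_mult_vec: "w \<in> carrier_vec n \<Longrightarrow>
  jordan_block n (0::complex) *\<^sub>v w = vec n (\<lambda>i. if Suc i < n then w $ (Suc i) else 0)"
proof (rule eq_vecI)
  fix i assume w: "w \<in> carrier_vec n" and "i < dim_vec (vec n (\<lambda>i. if Suc i < n then w $ (Suc i) else 0))"
  then have i: "i < n" by simp
  have "(jordan_block n (0::complex) *\<^sub>v w) $ i = (\<Sum>k = 0..<n. (if i = k then 0 else if Suc i = k then 1 else 0) * w $ k)"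
    using i w by (simp add: jordan_block_def scalar_prod_def)
  also have "\<dots> = (\<Sum>k = 0..<n. if Suc i = k then w $ k else 0)" by (rule sum.cong) auto
  also have "\<dots> = (if Suc i < n then w $ (Suc i) else 0)"
  proof (cases "Suc i < n")
    case True then show ?thesis by (simp add: sum_delta_gen)
  next
    case False then show ?thesis by simp
  qed
  finally show "(jordan_block n (0::complex) *\<^sub>v w) $ i = vec n (\<lambda>i. if Suc i < n then w $ (Suc i) else 0) $ i"
    using i by simp
qed auto

theorem lemma3p4:
  fixes n :: nat and x :: "complex vec"
  assumes "x \<in> carrier_vec n"
  shows "strongly_adjoint_c_real n (jordan_block n (0::complex), x)"
proof -
  define a where "a = x $ (n - 1)"
  define s :: complex where "s = (-1)^(n-1)"
  have ss: "s * s = 1" "cnj s = s" by (simp_all add: s_def power_mult_distrib[symmetric])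
  define c :: complex where "c = (if a = 0 then 1 else - s * cnj a / a)"
  have cc: "c * cnj c = 1"
  proof (cases "a = 0")
    case False
    have "cnj a \<noteq> 0" using False by simp
    have "c * cnj c = (s * s) * (cnj a * a) / (a * cnj a)" using False ss
      by (simp add: c_def)
    also have "\<dots> = 1" using False ss \<open>cnj a \<noteq> 0\<close> by (simp add: mult.commute)
    finally show ?thesis .
  qed (simp add: c_def)
  have ca: "c * s * a = - cnj a"
  proof (cases "a = 0")
    case False
    have "c * s * a = - (s * s) * cnj a" using False by (simp add: c_def)
    then show ?thesis using ss by simp
  qed (simp add: c_def)
  define f where "f = (\<lambda>i::nat. c * (-1)^i)"
  define A where "A = dg n f"
  define v where "v = vec n (\<lambda>i. if i = 0 then 0 else - cnj (x $ (i-1)) - f (i-1) * x $ (i-1))"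
  have vc: "v \<in> carrier_vec n" by (simp add: v_def)
  have cA: "map_mat cnj A = dg n (\<lambda>i. cnj (f i))"
    by (rule eq_matI) (auto simp: A_def dg_def)
  have ff: "f i * cnj (f i) = 1" for i
  proof -
    have "f i * cnj (f i) = (c * cnj c) * ((-1)^i * (-1)^i)" by (simp add: f_def)
    also have "\<dots> = 1" using cc by (simp add: power_mult_distrib[symmetric])
    finally show ?thesis .
  qed
  have fS: "f (Suc i) = - f i" for i by (simp add: f_def)
  have AA: "A * map_mat cnj A = 1\<^sub>m n"
    unfolding cA unfolding A_def dg_dg ff by (rule eq_matI) (auto simp: dg_def)
  have AA2: "map_mat cnj A * A = 1\<^sub>m n"
    unfolding cA unfolding A_def dg_dg using ff
    by (intro eq_matI) (auto simp: dg_def mult.commute)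
  have Ac: "A \<in> carrier_mat n n" by (simp add: A_def)
  have inv: "invertible_mat A"
    unfolding invertible_mat_def inverts_mat_def using Ac AA AA2
    by (intro conjI exI[of _ "map_mat cnj A"]) auto
  have mi: "mat_inv A = map_mat cnj A"
  proof (cases "mat_inverse A")
    case None
    then have "A \<notin> Units (ring_mat TYPE(complex) n n)" using mat_inverse(1)[OF Ac, where b=n] by blast
    moreover have "A \<in> Units (ring_mat TYPE(complex) n n)"
      using Ac AA AA2 by (auto simp: Units_def ring_mat_def intro!: bexI[of _ "map_mat cnj A"])
    ultimately show ?thesis by blast
  next
    case (Some B)
    from mat_inverse(2)[OF Ac Some] have B: "A * B = 1\<^sub>m n" "B * A = 1\<^sub>m n" "B \<in> carrier_mat n n" by auto
    have "B = (map_mat cnj A * A) * B" using AA2 B(3) by simp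
    also have "\<dots> = map_mat cnj A * (A * B)" using Ac B(3) by (simp add: assoc_mult_mat[of _ n n _ n _ n])
    also have "\<dots> = map_mat cnj A" using B(1) Ac by simp
    finally show ?thesis using Some by (simp add: mat_inv_def)
  qed
  let ?J = "jordan_block n (0::complex)"
  have Jc: "?J \<in> carrier_mat n n" by (simp add: jordan_block_def)
  have cJ: "map_mat cnj ?J = ?J" by (rule eq_matI) (auto simp: jordan_block_def)
  have conj_J: "A * ?J * mat_inv A = - ?J"
  proof (rule eq_matI)
    fix i j assume "i < dim_row (- ?J)" "j < dim_col (- ?J)"
    then have ij: "i < n" "j < n" by auto
    have "(A * ?J * mat_inv A) $$ (i,j) = f i * ?J $$ (i,j) * cnj (f j)"
    proof -
      have M: "dg n f * ?J \<in> carrier_mat n n" using Jc by (simp add: mult_carrier_mat[OF dg_carrier Jc])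
      show ?thesis
        unfolding mi unfolding cA unfolding A_def using ij Jc
        by (simp add: dg_mult_r[OF M] dg_mult_l[OF Jc])
    qed
    also have "\<dots> = - ?J $$ (i,j)"
    proof (cases "Suc i = j")
      case True
      then show ?thesis using ij ff[of i] by (simp add: True[symmetric] fS)
    qed (use ij in auto)
    finally show "(A * ?J * mat_inv A) $$ (i,j) = (- ?J) $$ (i,j)" using ij by simp
  qed (use Ac Jc mi in auto)
  have v1: "A *\<^sub>v map_vec cnj v + v = 0\<^sub>v n"
  proof (rule eq_vecI)
    fix i assume "i < dim_vec (0\<^sub>v n :: complex vec)"
    then have i: "i < n" by simp
    have "(A *\<^sub>v map_vec cnj v + v) $ i = f i * cnj (v $ i) + v $ i"
      using i vc by (simp add: A_def dg_mult_vec)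
    also have "\<dots> = 0"
    proof (cases i)
      case (Suc k)
      have "f i * cnj (v $ i) + v $ i = - f i * x $ k - f i * cnj (f k) * cnj (x $ k) - cnj (x $ k) - f k * x $ k"
        using i Suc by (simp add: v_def algebra_simps)
      also have "\<dots> = 0" using ff[of k] Suc by (simp add: fS algebra_simps)
      finally show ?thesis .
    qed (use i in \<open>simp add: v_def\<close>)
    finally show "(A *\<^sub>v map_vec cnj v + v) $ i = 0\<^sub>v n $ i" using i by simp
  qed (use vc Ac in auto)
  have v2: "A *\<^sub>v x - (- ?J) *\<^sub>v v = - map_vec cnj x"
  proof (rule eq_vecI)
    fix i assume "i < dim_vec (- map_vec cnj x)"
    then have i: "i < n" using assms by simp
    have "(- ?J) *\<^sub>v v = - (?J *\<^sub>v v)" using Jc vc by (simp add: uminus_mult_mat_vec)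
    then have "(A *\<^sub>v x - (- ?J) *\<^sub>v v) $ i = f i * x $ i + (if Suc i < n then v $ (Suc i) else 0)"
      using i vc assms by (simp add: A_def dg_mult_vec jb_mult_vec)
    also have "\<dots> = - cnj (x $ i)"
    proof (cases "Suc i < n")
      case True then show ?thesis by (simp add: v_def)
    next
      case False
      then have "i = n - 1" using i by simp
      then show ?thesis using False ca by (simp add: f_def a_def s_def)
    qed
    finally show "(A *\<^sub>v x - (- ?J) *\<^sub>v v) $ i = (- map_vec cnj x) $ i" using i assms by simp
  qed (use assms in auto)
  show ?thesis
    unfolding strongly_adjoint_c_real_def
  proof (rule bexI[of _ "(A, v)"])
    show "(A, v) \<in> Aff n" using Ac inv vc by (simp add: Aff_def)
    show "aff_mult (A, v) (aff_cnj (A, v)) = aff_one n \<and> Ad (A, v) (?J, x) = aff_neg (aff_cnj (?J, x))"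
      using AA v1 v2 conj_J cJ by (simp add: aff_mult_def aff_cnj_def aff_one_def Ad_def aff_neg_def)
  qed
qed

end
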